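(* Let $m>1$, $\chi>0$, $N\ge 2$, and assume $\chi<C_N$. Let $X_0\in\mathcal R^N$ and let $X$ be the maximal solution in $\mathcal R^N$ of the gradient flow system with $X(0)=X_0$. Then the maximal time of existence of $X$ is $T=+\infty$.
   Context: $\mathcal R^p=\{X\in\mathbb R^p: X_1<X_2<\dots<X_p,\ \sum_{i=1}^pX_i=0\}$. For an integer $p\ge 2$, the constant $C_p>0$ is defined by $$\frac1{C_p}=\max_{X\in\mathcal R^p}\frac{\sum_{1\le i\ne j\le p}|X_j-X_i|^{1-m}}{\sum_{i=1}^{p-1}(X_{i+1}-X_i)^{1-m}}.$$ The gradient flow system is the ODE system, for $i=1,\dots,N$, $$\dot X_i=-(X_{i+1}-X_i)^{-m}+(X_i-X_{i-1})^{-m}+2\chi\sum_{j\ne i}\mathrm{sign}(j-i)\,|X_j-X_i|^{-m},$$ with the convention that the term $-(X_{i+1}-X_i)^{-m}$ is absent for $i=N$ and the term $(X_i-X_{i-1})^{-m}$ is absent for $i=1$. It is the Euclidean gradient flow $\dot X=-\nabla\mathcal F^N_m(X)$ of $\mathcal F^N_m(X)=\frac1{m-1}\sum_{i=1}^{N-1}(X_{i+1}-X_i)^{1-m}-\frac{\chi}{m-1}\sum_{1\le i\ne j\le N}|X_i-X_j|^{1-m}$. *)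

theory Defs
  imports "HOL-Analysis.Analysis" "HOL-Library.Extended_Real"
begin

text \<open>Configurations are functions nat => real, only indices 1..p matter.\<close>

definition ordered_conf :: "nat \<Rightarrow> (nat \<Rightarrow> real) set" where
  "ordered_conf p = {X. (\<forall>i\<in>{1..<p}. X i < X (Suc i)) \<and> (\<Sum>i=1..p. X i) = 0}"

definition ratio_C :: "real \<Rightarrow> nat \<Rightarrow> (nat \<Rightarrow> real) \<Rightarrow> real" where
  "ratio_C m p X =
     (\<Sum>i\<in>{1..p}. \<Sum>j\<in>{1..p} - {i}. \<bar>X j - X i\<bar> powr (1 - m))
     / (\<Sum>i\<in>{1..<p}. (X (Suc i) - X i) powr (1 - m))"

definition C_const :: "real \<Rightarrow> nat \<Rightarrow> real" where
  "C_const m p = 1 / (SUP X\<in>ordered_conf p. ratio_C m p X)"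

definition flow_field :: "real \<Rightarrow> real \<Rightarrow> nat \<Rightarrow> (nat \<Rightarrow> real) \<Rightarrow> nat \<Rightarrow> real" where
  "flow_field m chi N X i =
     (if i < N then - ((X (Suc i) - X i) powr (- m)) else 0)
   + (if 1 < i then (X i - X (i - 1)) powr (- m) else 0)
   + 2 * chi * (\<Sum>j\<in>{1..N} - {i}. sgn (real j - real i) * \<bar>X j - X i\<bar> powr (- m))"

definition flow_solution ::
  "real \<Rightarrow> real \<Rightarrow> nat \<Rightarrow> (nat \<Rightarrow> real) \<Rightarrow> ereal \<Rightarrow> (real \<Rightarrow> nat \<Rightarrow> real) \<Rightarrow> bool" where
  "flow_solution m chi N X0 T X \<longleftrightarrow>
     0 < T \<and>
     (\<forall>i\<in>{1..N}. X 0 i = X0 i) \<and>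
     (\<forall>t. 0 \<le> t \<and> ereal t < T \<longrightarrow>
        X t \<in> ordered_conf N \<and>
        (\<forall>i\<in>{1..N}. ((\<lambda>s. X s i) has_real_derivative flow_field m chi N (X t) i)
                        (at t within {s. 0 \<le> s \<and> ereal s < T})))"

definition maximal_flow_solution ::
  "real \<Rightarrow> real \<Rightarrow> nat \<Rightarrow> (nat \<Rightarrow> real) \<Rightarrow> ereal \<Rightarrow> (real \<Rightarrow> nat \<Rightarrow> real) \<Rightarrow> bool" where
  "maximal_flow_solution m chi N X0 T X \<longleftrightarrow>
     flow_solution m chi N X0 T X \<and>
     \<not> (\<exists>T' Y. T < T' \<and> flow_solution m chi N X0 T' Y \<and>
          (\<forall>t. 0 \<le> t \<and> ereal t < T \<longrightarrow> (\<forall>i\<in>{1..N}. Y t i = X t i)))"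

end

theory Submission
  imports Defs
begin


lemma picard:
  fixes G :: "'a::banach \<Rightarrow> 'a"
  assumes L: "\<And>x y. norm (G x - G y) \<le> L * norm (x - y)" and L0: "0 \<le> L"
    and h0: "0 < h" and Lh: "L * h < 1"
  shows "\<exists>y. y t0 = z \<and> (\<forall>t\<in>{t0..t0+h}. (y has_vector_derivative G (y t)) (at t within {t0..t0+h}))"
proof -
  define cl where "cl t = max t0 (min (t0+h) t)" for t
  have clI: "cl t \<in> {t0..t0+h}" for t using h0 by (auto simp: cl_def)
  have cl_id: "t \<in> {t0..t0+h} \<Longrightarrow> cl t = t" for t by (auto simp: cl_def)
  have contcl: "continuous_on UNIV cl" unfolding cl_def by (intro continuous_intros)
  have Gcont: "continuous_on UNIV G"
    unfolding continuous_on_iff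
  proof (intro ballI allI impI)
    fix x and e :: real assume "e > 0"
    show "\<exists>d>0. \<forall>x'\<in>UNIV. dist x' x < d \<longrightarrow> dist (G x') (G x) < e"
    proof (intro exI[of _ "e/(L+1)"] conjI ballI impI)
      show "e/(L+1) > 0" using \<open>e>0\<close> L0 by simp
      fix x' assume "dist x' x < e/(L+1)"
      hence "(L+1) * dist x' x < e" using L0 by (simp add: field_simps)
      moreover have "dist (G x') (G x) \<le> L * dist x' x" using L[of x' x] by (simp add: dist_norm)
      moreover have "L * dist x' x \<le> (L+1) * dist x' x" by (simp add: distrib_right)
      ultimately show "dist (G x') (G x) < e" by linarith
    qed
  qed
  have Gy_cont: "continuous_on S (\<lambda>s. G (apply_bcontfun y s))" for y :: "real \<Rightarrow>\<^sub>C 'a" and S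
    by (rule continuous_on_compose2[OF Gcont continuous_on_apply_bcontfun]) auto
  have Gy_int: "(\<lambda>s. G (apply_bcontfun y s)) integrable_on {a..b}" for y :: "real \<Rightarrow>\<^sub>C 'a" and a b
    by (rule integrable_continuous_interval[OF Gy_cont])
  have Gbound: "norm (G (apply_bcontfun y s)) \<le> norm (G 0) + L * norm y" for y :: "real \<Rightarrow>\<^sub>C 'a" and s
  proof -
    have "norm (G (y s)) \<le> norm (G 0) + norm (G (y s) - G 0)" by (rule norm_triangle_sub)
    also have "\<dots> \<le> norm (G 0) + L * norm (y s)" using L[of "y s" 0] by simp
    also have "\<dots> \<le> norm (G 0) + L * norm y" using norm_bounded[of y s] L0 by (simp add: mult_left_mono)
    finally show ?thesis .
  qed
  define Pf where "Pf y = (\<lambda>t. z + integral {t0..cl t} (\<lambda>s. G (apply_bcontfun y s)))" for y :: "real \<Rightarrow>\<^sub>C 'a"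
  have Pf_in: "Pf y \<in> bcontfun" for y
  proof (rule bcontfun_normI)
    have c1: "continuous_on {t0..t0+h} (\<lambda>u. integral {t0..u} (\<lambda>s. G (apply_bcontfun y s)))"
      by (rule indefinite_integral_continuous_1[OF Gy_int])
    have "continuous_on UNIV (\<lambda>t. integral {t0..cl t} (\<lambda>s. G (apply_bcontfun y s)))"
      by (rule continuous_on_compose2[OF c1 contcl]) (use clI in auto)
    thus "continuous_on UNIV (Pf y)" unfolding Pf_def by (intro continuous_intros)
    fix t
    have "norm (integral {t0..cl t} (\<lambda>s. G (apply_bcontfun y s))) \<le> (norm (G 0) + L * norm y) * (cl t - t0)"
      by (rule integral_bound) (use clI[of t] Gy_cont Gbound in auto)
    also have "\<dots> \<le> (norm (G 0) + L * norm y) * h"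
      using clI[of t] L0 by (intro mult_left_mono) auto
    finally show "norm (Pf y t) \<le> norm z + (norm (G 0) + L * norm y) * h"
      unfolding Pf_def by (smt (verit) norm_triangle_ineq)
  qed
  define P where "P y = Bcontfun (Pf y)" for y
  have Papp: "apply_bcontfun (P y) = Pf y" for y unfolding P_def using Pf_in by (simp add: Bcontfun_inverse)
  have contr: "dist (P y1) (P y2) \<le> (L*h) * dist y1 y2" for y1 y2
  proof (rule dist_bound)
    fix t
    have "dist (P y1 t) (P y2 t) = norm (integral {t0..cl t} (\<lambda>s. G (apply_bcontfun y1 s) - G (apply_bcontfun y2 s)))"
      unfolding Papp Pf_def dist_norm by (simp add: integral_diff[OF Gy_int Gy_int])
    also have "\<dots> \<le> (L * dist y1 y2) * (cl t - t0)"
    proof (rule integral_bound)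
      show "continuous_on {t0..cl t} (\<lambda>s. G (apply_bcontfun y1 s) - G (apply_bcontfun y2 s))"
        by (intro continuous_intros Gy_cont)
      fix s
      have "norm (G (apply_bcontfun y1 s) - G (apply_bcontfun y2 s)) \<le> L * norm (apply_bcontfun y1 s - apply_bcontfun y2 s)" by (rule L)
      also have "\<dots> \<le> L * dist y1 y2" using dist_bounded[of y1 s y2] L0 by (simp add: dist_norm mult_left_mono)
      finally show "norm (G (apply_bcontfun y1 s) - G (apply_bcontfun y2 s)) \<le> L * dist y1 y2" .
    qed (use clI[of t] in auto)
    also have "\<dots> \<le> (L * dist y1 y2) * h" using clI[of t] L0 by (intro mult_left_mono) auto
    finally show "dist (P y1 t) (P y2 t) \<le> L * h * dist y1 y2" by (simp add: mult_ac)
  qed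
  obtain y where fxp: "P y = y" using banach_fix_type[of "L*h" P] contr L0 h0 Lh by auto
  have yeq: "apply_bcontfun y t = z + integral {t0..t} (\<lambda>s. G (apply_bcontfun y s))" if "t \<in> {t0..t0+h}" for t
    using fxp Papp[of y] that cl_id unfolding Pf_def by (metis)
  show ?thesis
  proof (intro exI[of _ "apply_bcontfun y"] conjI ballI)
    show "apply_bcontfun y t0 = z" using yeq[of t0] h0 by simp
    fix t assume t: "t \<in> {t0..t0+h}"
    have "((\<lambda>u. z + integral {t0..u} (\<lambda>s. G (apply_bcontfun y s))) has_vector_derivative G (apply_bcontfun y t)) (at t within {t0..t0+h})"
      using integral_has_vector_derivative[OF Gy_cont t]
      by (intro derivative_eq_intros) auto
    thus "(apply_bcontfun y has_vector_derivative G (apply_bcontfun y t)) (at t within {t0..t0+h})"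
      by (rule has_vector_derivative_transform[OF t, rotated]) (simp add: yeq)
  qed
qed


lemma bound_diff:
  fixes f f' :: "real \<Rightarrow> real"
  assumes ab: "a \<le> b" and d: "\<And>s. s \<in> {a..b} \<Longrightarrow> (f has_real_derivative f' s) (at s within {a..b})"
    and B: "\<And>s. s \<in> {a..b} \<Longrightarrow> \<bar>f' s\<bar> \<le> B"
  shows "\<bar>f b - f a\<bar> \<le> B * (b - a)"
proof (cases "a = b")
  case True thus ?thesis by simp
next
  case False
  hence lt: "a < b" using ab by simp
  have dat: "(f has_real_derivative f' s) (at s)" if "a < s" "s < b" for s
  proof -
    have "s \<in> interior {a..b}" using that by simp
    hence "at s within {a..b} = at s" by (rule at_within_interior)
    thus ?thesis using d[of s] that by simp
  qed
  have "continuous_on {a..b} f" by (rule DERIV_continuous_on[OF d])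
  then obtain l z where z: "a < z" "z < b" "DERIV f z :> l" "f b - f a = (b - a) * l"
    using MVT[OF lt] dat by (meson real_differentiable_def)
  have "l = f' z" using DERIV_unique[OF z(3) dat[OF z(1,2)]] .
  hence "\<bar>l\<bar> \<le> B" using B[of z] z by simp
  thus ?thesis using z(4) lt by (simp add: abs_mult mult.commute mult_right_mono)
qed

lemma DERIV_abs_powr:
  fixes u p :: real
  assumes "u \<noteq> 0"
  shows "DERIV (\<lambda>u. \<bar>u\<bar> powr p) u :> p * \<bar>u\<bar> powr (p-1) * sgn u"
proof (cases "u > 0")
  case True
  have "DERIV (\<lambda>u. u powr p) u :> p * u powr (p-1)" by (rule has_real_derivative_powr[OF True])
  hence "DERIV (\<lambda>u. \<bar>u\<bar> powr p) u :> p * u powr (p-1)"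
    by (rule has_field_derivative_transform_within_open[where S="{0<..}"]) (use True in auto)
  thus ?thesis using True by simp
next
  case False
  hence neg: "u < 0" using assms by simp
  have "DERIV (\<lambda>u. (-u) powr p) u :> p * (-u) powr (p - of_nat 1) * (-1)"
    by (rule DERIV_fun_powr) (use neg in \<open>auto intro!: derivative_eq_intros\<close>)
  hence "DERIV (\<lambda>u. \<bar>u\<bar> powr p) u :> p * (-u) powr (p - of_nat 1) * (-1)"
    by (rule has_field_derivative_transform_within_open[where S="{..<0}"]) (use neg in auto)
  thus ?thesis using neg by simp
qed

lemma powr_lip:
  fixes a b c m :: real
  assumes c: "0 < c" and m: "0 < m" and a: "c \<le> a" and b: "c \<le> b"
  shows "\<bar>a powr (-m) - b powr (-m)\<bar> \<le> m * c powr (-m-1) * \<bar>a - b\<bar>"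
proof -
  have key: "\<bar>y powr (-m) - x powr (-m)\<bar> \<le> m * c powr (-m-1) * (y - x)" if "c \<le> x" "x \<le> y" for x y
  proof (rule bound_diff[where f'="\<lambda>s. -m * s powr (-m-1)"])
    fix s assume s: "s \<in> {x..y}"
    hence sp: "s > 0" using that c by auto
    have "DERIV (\<lambda>u. u powr (-m)) s :> (-m) * s powr (-m-1)"
      using has_real_derivative_powr[OF sp, of "-m"] by simp
    thus "((\<lambda>u. u powr (-m)) has_real_derivative - m * s powr (- m - 1)) (at s within {x..y})"
      by (rule has_field_derivative_at_within)
    have "s powr (-m-1) \<le> c powr (-m-1)" by (rule powr_mono2') (use s that c m in auto)
    thus "\<bar>- m * s powr (- m - 1)\<bar> \<le> m * c powr (- m - 1)" using m by (simp add: abs_mult)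
  qed (use that in auto)
  show ?thesis
  proof (cases "a \<le> b")
    case True thus ?thesis using key[OF a True] by (simp add: abs_minus_commute)
  next
    case False thus ?thesis using key[OF b, of a] by (simp add: abs_minus_commute)
  qed
qed

lemma ordered_mono:
  fixes x :: "nat \<Rightarrow> real"
  assumes g: "\<forall>i\<in>{1..<N}. x i + c \<le> x (Suc i)" and c: "0 \<le> c"
    and ab: "1 \<le> a" "a < b" "b \<le> N"
  shows "x a + c \<le> x b"
  using ab
proof (induction b)
  case 0 thus ?case by simp
next
  case (Suc b)
  show ?case
  proof (cases "a = b")
    case True thus ?thesis using g Suc.prems by auto
  next
    case False
    hence "x a + c \<le> x b" using Suc by auto
    moreover have "x b + c \<le> x (Suc b)" using g Suc.prems False by auto
    ultimately show ?thesis using c by linarith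
  qed
qed


lemma key_identity:
  fixes g a :: "nat \<Rightarrow> real" and e :: "nat \<Rightarrow> nat \<Rightarrow> real" and chi :: real
  assumes esym: "\<And>i j. e i j = e j i"
  shows "(\<Sum>k=1..N. ((if k<N then - g k else 0) + (if 1<k then g (k-1) else 0)
            + 2*chi*(\<Sum>j\<in>{1..N}-{k}. sgn(real j - real k) * e k j)) * a k)
        = (\<Sum>i\<in>{1..<N}. g i * (a (Suc i) - a i))
          - chi * (\<Sum>i=1..N. \<Sum>j\<in>{1..N}-{i}. sgn(real j - real i) * e i j * (a j - a i))"
proof -
  have p1: "(\<Sum>k=1..N. (if k<N then - g k else 0) * a k) = -(\<Sum>i\<in>{1..<N}. g i * a i)"
  proof -
    have "(\<Sum>k=1..N. (if k<N then - g k else 0) * a k) = (\<Sum>k=1..N. if k<N then - (g k * a k) else 0)"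
      by (intro sum.cong) auto
    also have "\<dots> = (\<Sum>k\<in>{k\<in>{1..N}. k<N}. - (g k * a k))" by (subst sum.inter_filter) auto
    also have "{k\<in>{1..N}. k<N} = {1..<N}" by auto
    finally show ?thesis by (simp add: sum_negf)
  qed
  have p2: "(\<Sum>k=1..N. (if 1<k then g (k-1) else 0) * a k) = (\<Sum>i\<in>{1..<N}. g i * a (Suc i))"
  proof -
    have "(\<Sum>k=1..N. (if 1<k then g (k-1) else 0) * a k) = (\<Sum>k=1..N. if 1<k then g (k-1) * a k else 0)"
      by (intro sum.cong) auto
    also have "\<dots> = (\<Sum>k\<in>{k\<in>{1..N}. 1<k}. g (k-1) * a k)" by (subst sum.inter_filter) auto
    also have "{k\<in>{1..N}. 1<k} = Suc ` {1..<N}"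
    proof (rule set_eqI)
      fix k
      show "k \<in> {k\<in>{1..N}. 1<k} \<longleftrightarrow> k \<in> Suc ` {1..<N}"
      proof
        assume "k \<in> {k\<in>{1..N}. 1<k}"
        hence "k = Suc (k-1)" "k-1 \<in> {1..<N}" by auto
        thus "k \<in> Suc ` {1..<N}" by (metis imageI)
      qed auto
    qed
    also have "(\<Sum>k\<in>Suc ` {1..<N}. g (k-1) * a k) = (\<Sum>i\<in>{1..<N}. g i * a (Suc i))"
      by (subst sum.reindex) auto
    finally show ?thesis .
  qed
  define s where "s i j = sgn (real j - real i)" for i j :: nat
  have santi: "s j i = - s i j" for i j unfolding s_def by (simp add: sgn_minus[symmetric])
  have drop: "(\<Sum>j\<in>{1..N}-{i}. s i j * f j) = (\<Sum>j=1..N. s i j * f j)" for i and f :: "nat \<Rightarrow> real"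
    by (rule sum.mono_neutral_left) (auto simp: s_def)
  have swap: "(\<Sum>i=1..N. \<Sum>j=1..N. s i j * e i j * a j) = - (\<Sum>i=1..N. \<Sum>j=1..N. s i j * e i j * a i)"
  proof -
    have "(\<Sum>i=1..N. \<Sum>j=1..N. s i j * e i j * a j) = (\<Sum>j=1..N. \<Sum>i=1..N. s i j * e i j * a j)"
      by (rule sum.swap)
    also have "\<dots> = (\<Sum>j=1..N. \<Sum>i=1..N. - (s j i * e j i * a j))"
      by (intro sum.cong refl) (metis (no_types) santi esym mult_minus_left minus_minus)
    finally show ?thesis by (simp add: sum_negf)
  qed
  have p3: "(\<Sum>i=1..N. \<Sum>j\<in>{1..N}-{i}. s i j * e i j * (a j - a i))
        = -2 * (\<Sum>i=1..N. \<Sum>j=1..N. s i j * e i j * a i)"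
  proof -
    have "(\<Sum>i=1..N. \<Sum>j\<in>{1..N}-{i}. s i j * e i j * (a j - a i))
        = (\<Sum>i=1..N. \<Sum>j=1..N. s i j * (e i j * (a j - a i)))"
      using drop by (simp add: mult.assoc)
    also have "\<dots> = (\<Sum>i=1..N. \<Sum>j=1..N. s i j * e i j * a j) - (\<Sum>i=1..N. \<Sum>j=1..N. s i j * e i j * a i)"
      by (simp add: sum_subtractf[symmetric] right_diff_distrib mult.assoc)
    finally show ?thesis using swap by simp
  qed
  have p4: "(\<Sum>k=1..N. (2*chi*(\<Sum>j\<in>{1..N}-{k}. s k j * e k j)) * a k)
        = 2 * chi * (\<Sum>i=1..N. \<Sum>j=1..N. s i j * e i j * a i)"
  proof -
    have "(\<Sum>k=1..N. (2*chi*(\<Sum>j\<in>{1..N}-{k}. s k j * e k j)) * a k)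
        = (\<Sum>k=1..N. 2*chi*((\<Sum>j=1..N. s k j * e k j) * a k))" using drop[of _ "e _"] by (simp add: mult.assoc)
    also have "\<dots> = 2*chi*(\<Sum>k=1..N. (\<Sum>j=1..N. s k j * e k j) * a k)" by (simp add: sum_distrib_left)
    also have "\<dots> = 2*chi*(\<Sum>k=1..N. (\<Sum>j=1..N. s k j * e k j * a k))" by (simp add: sum_distrib_right)
    finally show ?thesis .
  qed
  have "(\<Sum>k=1..N. ((if k<N then - g k else 0) + (if 1<k then g (k-1) else 0)
            + 2*chi*(\<Sum>j\<in>{1..N}-{k}. s k j * e k j)) * a k)
      = (\<Sum>k=1..N. (if k<N then - g k else 0) * a k) + (\<Sum>k=1..N. (if 1<k then g (k-1) else 0) * a k)
        + (\<Sum>k=1..N. (2*chi*(\<Sum>j\<in>{1..N}-{k}. s k j * e k j)) * a k)"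
    by (simp add: sum.distrib distrib_right)
  also have "\<dots> = (\<Sum>i\<in>{1..<N}. g i * (a (Suc i) - a i))
          - chi * (\<Sum>i=1..N. \<Sum>j\<in>{1..N}-{i}. s i j * e i j * (a j - a i))"
    unfolding p1 p2 p4 p3 by (simp add: sum_subtractf right_diff_distrib)
  finally show ?thesis unfolding s_def .
qed


definition phi :: "real \<Rightarrow> real \<Rightarrow> real \<Rightarrow> real" where
  "phi m c d = (max d c) powr (-m)"

lemma phi_lip:
  assumes c: "0 < c" and m: "0 < m"
  shows "\<bar>phi m c a - phi m c b\<bar> \<le> m * c powr (-m-1) * \<bar>a - b\<bar>"
proof -
  have "\<bar>phi m c a - phi m c b\<bar> \<le> m * c powr (-m-1) * \<bar>max a c - max b c\<bar>"
    unfolding phi_def by (rule powr_lip[OF c m]) auto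
  also have "\<dots> \<le> m * c powr (-m-1) * \<bar>a - b\<bar>"
    by (rule mult_left_mono) (use m in \<open>auto simp: max_def\<close>)
  finally show ?thesis .
qed

lemma phi_nonneg: "0 \<le> phi m c d" unfolding phi_def by simp

lemma phi_le: assumes "0 < c" "0 < m" shows "phi m c d \<le> c powr (-m)"
  unfolding phi_def by (rule powr_mono2') (use assms in auto)

lemma phi_eq: "c \<le> d \<Longrightarrow> phi m c d = d powr (-m)"
  unfolding phi_def by (simp add: max_def)

definition ffc :: "real \<Rightarrow> real \<Rightarrow> nat \<Rightarrow> real \<Rightarrow> (nat \<Rightarrow> real) \<Rightarrow> nat \<Rightarrow> real" where
  "ffc m chi N c x i =
     (if i < N then - phi m c (x (Suc i) - x i) else 0)
   + (if 1 < i then phi m c (x i - x (i - 1)) else 0)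
   + 2 * chi * (\<Sum>j\<in>{1..N} - {i}. sgn (real j - real i) * phi m c \<bar>x j - x i\<bar>)"

lemma diff3: "((a1::real)+a2+k*u1) - (b1+b2+k*u2) = (a1-b1)+(a2-b2)+k*(u1-u2)"
  by algebra

lemma absk: "\<bar>d\<bar> \<le> B \<Longrightarrow> 0 \<le> k \<Longrightarrow> \<bar>k*d\<bar> \<le> k*(B::real)"
  by (simp add: abs_mult mult_left_mono)

lemma ffc_lip:
  assumes c: "0 < c" and m: "0 < m" and chi: "0 \<le> chi" and i: "i \<in> {1..N}"
    and D: "\<forall>j\<in>{1..N}. \<bar>x j - y j\<bar> \<le> \<Delta>"
  shows "\<bar>ffc m chi N c x i - ffc m chi N c y i\<bar> \<le> m * c powr (-m-1) * (4 + 4*chi*N) * \<Delta>"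
proof -
  define K where "K = m * c powr (-m-1)"
  have K0: "0 \<le> K" unfolding K_def using m by simp
  have D0: "0 \<le> \<Delta>" using D i by force
  have pl: "\<bar>phi m c a - phi m c b\<bar> \<le> K * \<bar>a - b\<bar>" for a b unfolding K_def by (rule phi_lip[OF c m])
  have two: "\<bar>(x j - x k) - (y j - y k)\<bar> \<le> 2 * \<Delta>" if "j \<in> {1..N}" "k \<in> {1..N}" for j k
    using D that by (smt (verit))
  have t1: "\<bar>(if i < N then - phi m c (x (Suc i) - x i) else 0) - (if i < N then - phi m c (y (Suc i) - y i) else 0)\<bar> \<le> 2 * K * \<Delta>"
  proof (cases "i < N")
    case True
    have "\<bar>phi m c (x (Suc i) - x i) - phi m c (y (Suc i) - y i)\<bar> \<le> K * \<bar>(x (Suc i) - x i) - (y (Suc i) - y i)\<bar>" by (rule pl)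
    also have "\<dots> \<le> K * (2 * \<Delta>)" using two[of "Suc i" i] True i K0 by (intro mult_left_mono) auto
    finally show ?thesis using True by (simp add: abs_minus_commute)
  qed (use K0 D0 in auto)
  have t2: "\<bar>(if 1 < i then phi m c (x i - x (i - 1)) else 0) - (if 1 < i then phi m c (y i - y (i - 1)) else 0)\<bar> \<le> 2 * K * \<Delta>"
  proof (cases "1 < i")
    case True
    have "\<bar>phi m c (x i - x (i - 1)) - phi m c (y i - y (i - 1))\<bar> \<le> K * \<bar>(x i - x (i-1)) - (y i - y (i-1))\<bar>" by (rule pl)
    also have "\<dots> \<le> K * (2 * \<Delta>)"
    proof -
      have "i - 1 \<in> {1..N}" using True i by auto
      thus ?thesis using mult_left_mono[OF two[OF i] K0] by blast
    qed
    finally show ?thesis using True by simp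
  qed (use K0 D0 in auto)
  have t3: "\<bar>(\<Sum>j\<in>{1..N} - {i}. sgn (real j - real i) * phi m c \<bar>x j - x i\<bar>)
           - (\<Sum>j\<in>{1..N} - {i}. sgn (real j - real i) * phi m c \<bar>y j - y i\<bar>)\<bar> \<le> real N * (2 * K * \<Delta>)"
  proof -
    have "\<bar>(\<Sum>j\<in>{1..N} - {i}. sgn (real j - real i) * phi m c \<bar>x j - x i\<bar>)
           - (\<Sum>j\<in>{1..N} - {i}. sgn (real j - real i) * phi m c \<bar>y j - y i\<bar>)\<bar>
        = \<bar>\<Sum>j\<in>{1..N} - {i}. sgn (real j - real i) * (phi m c \<bar>x j - x i\<bar> - phi m c \<bar>y j - y i\<bar>)\<bar>"
      by (simp add: sum_subtractf[symmetric] right_diff_distrib)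
    also have "\<dots> \<le> (\<Sum>j\<in>{1..N} - {i}. \<bar>sgn (real j - real i) * (phi m c \<bar>x j - x i\<bar> - phi m c \<bar>y j - y i\<bar>)\<bar>)"
      by (rule sum_abs)
    also have "\<dots> \<le> (\<Sum>j\<in>{1..N} - {i}. 2 * K * \<Delta>)"
    proof (rule sum_mono)
      fix j assume j: "j \<in> {1..N} - {i}"
      have "\<bar>sgn (real j - real i)\<bar> \<le> 1" by (simp add: abs_sgn_eq)
      moreover have "\<bar>phi m c \<bar>x j - x i\<bar> - phi m c \<bar>y j - y i\<bar>\<bar> \<le> K * \<bar>\<bar>x j - x i\<bar> - \<bar>y j - y i\<bar>\<bar>" by (rule pl)
      moreover have "\<bar>\<bar>x j - x i\<bar> - \<bar>y j - y i\<bar>\<bar> \<le> 2 * \<Delta>"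
      proof -
        have jN: "j \<in> {1..N}" using j by auto
        show ?thesis by (rule order_trans[OF abs_triangle_ineq3 two[OF jN i]])
      qed
      ultimately have "\<bar>phi m c \<bar>x j - x i\<bar> - phi m c \<bar>y j - y i\<bar>\<bar> \<le> K * (2 * \<Delta>)"
        and s1: "\<bar>sgn (real j - real i)\<bar> \<le> 1"
        using order_trans mult_left_mono K0 by blast+
      hence "\<bar>sgn (real j - real i)\<bar> * \<bar>phi m c \<bar>x j - x i\<bar> - phi m c \<bar>y j - y i\<bar>\<bar> \<le> 1 * (K * (2 * \<Delta>))"
        by (intro mult_mono) auto
      thus "\<bar>sgn (real j - real i) * (phi m c \<bar>x j - x i\<bar> - phi m c \<bar>y j - y i\<bar>)\<bar> \<le> 2 * K * \<Delta>"
        by (simp add: abs_mult)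
    qed
    also have "\<dots> = real (card ({1..N} - {i})) * (2 * K * \<Delta>)" by simp
    also have "\<dots> \<le> real N * (2 * K * \<Delta>)"
      using K0 D0 i by (intro mult_right_mono) (auto simp: card_Diff_singleton)
    finally show ?thesis .
  qed
  have "\<bar>ffc m chi N c x i - ffc m chi N c y i\<bar> \<le> 2*K*\<Delta> + 2*K*\<Delta> + 2*chi*(real N * (2*K*\<Delta>))"
  proof -
    have e: "ffc m chi N c x i - ffc m chi N c y i =
      ((if i < N then - phi m c (x (Suc i) - x i) else 0) - (if i < N then - phi m c (y (Suc i) - y i) else 0))
      + ((if 1 < i then phi m c (x i - x (i - 1)) else 0) - (if 1 < i then phi m c (y i - y (i - 1)) else 0))
      + 2 * chi * ((\<Sum>j\<in>{1..N} - {i}. sgn (real j - real i) * phi m c \<bar>x j - x i\<bar>)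
           - (\<Sum>j\<in>{1..N} - {i}. sgn (real j - real i) * phi m c \<bar>y j - y i\<bar>))"
      unfolding ffc_def by (rule diff3)
    have "\<bar>2 * chi * ((\<Sum>j\<in>{1..N} - {i}. sgn (real j - real i) * phi m c \<bar>x j - x i\<bar>)
           - (\<Sum>j\<in>{1..N} - {i}. sgn (real j - real i) * phi m c \<bar>y j - y i\<bar>))\<bar> \<le> 2*chi*(real N * (2*K*\<Delta>))"
      using t3 chi by (intro absk) auto
    thus ?thesis unfolding e using t1 t2 by linarith
  qed
  thus ?thesis unfolding K_def by (simp add: algebra_simps)
qed

lemma abs3: "\<bar>a\<bar> \<le> A \<Longrightarrow> \<bar>b\<bar> \<le> B \<Longrightarrow> \<bar>c\<bar> \<le> C \<Longrightarrow> \<bar>(a::real) + b + c\<bar> \<le> A + B + C"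
  by arith

lemma ffc_bound:
  assumes c: "0 < c" and m: "0 < m" and chi: "0 \<le> chi"
  shows "\<bar>ffc m chi N c x i\<bar> \<le> c powr (-m) * (2 + 2*chi*N)"
proof -
  define P where "P = c powr (-m)"
  have pb: "\<bar>phi m c d\<bar> \<le> P" for d using phi_le[OF c m] phi_nonneg unfolding P_def by (simp add: abs_of_nonneg)
  have a1: "\<bar>(if i < N then - phi m c (x (Suc i) - x i) else 0)\<bar> \<le> P" using pb by (auto simp: P_def)
  have a2: "\<bar>(if 1 < i then phi m c (x i - x (i - 1)) else 0)\<bar> \<le> P" using pb by (auto simp: P_def)
  have a3: "\<bar>\<Sum>j\<in>{1..N} - {i}. sgn (real j - real i) * phi m c \<bar>x j - x i\<bar>\<bar> \<le> real N * P"
  proof -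
    have "\<bar>\<Sum>j\<in>{1..N} - {i}. sgn (real j - real i) * phi m c \<bar>x j - x i\<bar>\<bar>
        \<le> (\<Sum>j\<in>{1..N} - {i}. \<bar>sgn (real j - real i) * phi m c \<bar>x j - x i\<bar>\<bar>)" by (rule sum_abs)
    also have "\<dots> \<le> (\<Sum>j\<in>{1..N} - {i}. P)"
    proof (rule sum_mono)
      fix j
      have "\<bar>sgn (real j - real i)\<bar> \<le> 1" by (simp add: abs_sgn_eq)
      thus "\<bar>sgn (real j - real i) * phi m c \<bar>x j - x i\<bar>\<bar> \<le> P"
        using pb[of "\<bar>x j - x i\<bar>"] unfolding abs_mult
        by (metis abs_ge_zero mult_le_cancel_right2 order_trans mult_left_le_one_le mult.commute)
    qed
    also have "\<dots> \<le> real N * P"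
    proof -
      have "card ({1..N}-{i}) \<le> card {1..N}" by (rule card_mono) auto
      moreover have "0 \<le> P" unfolding P_def by simp
      ultimately show ?thesis by (simp add: mult_right_mono)
    qed
    finally show ?thesis .
  qed
  have "\<bar>ffc m chi N c x i\<bar> \<le> P + P + 2*chi*(real N * P)"
  proof -
    have "\<bar>2 * chi * (\<Sum>j\<in>{1..N} - {i}. sgn (real j - real i) * phi m c \<bar>x j - x i\<bar>)\<bar> \<le> 2*chi*(real N * P)"
      using a3 chi by (intro absk) auto
    moreover have "ffc m chi N c x i = (if i < N then - phi m c (x (Suc i) - x i) else 0)
      + (if 1 < i then phi m c (x i - x (i - 1)) else 0)
      + 2 * chi * (\<Sum>j\<in>{1..N} - {i}. sgn (real j - real i) * phi m c \<bar>x j - x i\<bar>)" by (simp add: ffc_def)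
    ultimately show ?thesis using a1 a2 by (metis (no_types, lifting) abs3)
  qed
  moreover have "P + P + 2*chi*(real N * P) = P * (2 + 2*chi*N)" by algebra
  ultimately show ?thesis unfolding P_def by (rule ord_le_eq_trans)
qed

lemma ffc_eq:
  assumes g: "\<forall>k\<in>{1..<N}. x k + c \<le> x (Suc k)" and c: "0 < c" and i: "i \<in> {1..N}"
  shows "ffc m chi N c x i = flow_field m chi N x i"
proof -
  have a: "phi m c (x (Suc i) - x i) = (x (Suc i) - x i) powr (-m)" if "i < N"
    using bspec[OF g, of i] that i by (intro phi_eq) auto
  have b: "phi m c (x i - x (i - 1)) = (x i - x (i - 1)) powr (-m)" if "1 < i"
  proof -
    have i1: "i - 1 \<in> {1..<N}" using that i by auto
    have "x (i-1) + c \<le> x (Suc (i-1))" using bspec[OF g i1] by simp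
    thus ?thesis using that by (intro phi_eq) auto
  qed
  have cc: "phi m c \<bar>x j - x i\<bar> = \<bar>x j - x i\<bar> powr (-m)" if "j \<in> {1..N} - {i}" for j
  proof (rule phi_eq)
    show "c \<le> \<bar>x j - x i\<bar>"
    proof (cases "j < i")
      case True
      have "x j + c \<le> x i" by (rule ordered_mono[OF g _ _ True]) (use that i c in auto)
      thus ?thesis by linarith
    next
      case False hence ij: "i < j" using that by auto
      have "x i + c \<le> x j" by (rule ordered_mono[OF g _ _ ij]) (use that i c in auto)
      thus ?thesis by linarith
    qed
  qed
  have s: "(\<Sum>j\<in>{1..N}-{i}. sgn (real j - real i) * phi m c \<bar>x j - x i\<bar>)
      = (\<Sum>j\<in>{1..N}-{i}. sgn (real j - real i) * \<bar>x j - x i\<bar> powr (-m))"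
    by (rule sum.cong[OF refl]) (simp add: cc)
  show ?thesis unfolding ffc_def flow_field_def s using a b by simp
qed


definition Esum :: "real \<Rightarrow> real \<Rightarrow> nat \<Rightarrow> (nat \<Rightarrow> real) \<Rightarrow> real" where
  "Esum m chi N x = (\<Sum>i\<in>{1..<N}. (x (Suc i) - x i) powr (1-m))
     - chi * (\<Sum>i\<in>{1..N}. \<Sum>j\<in>{1..N} - {i}. \<bar>x j - x i\<bar> powr (1-m))"

lemma ordered_strict:
  fixes x :: "nat \<Rightarrow> real"
  assumes g: "\<forall>i\<in>{1..<N}. x i < x (Suc i)"
    and ab: "1 \<le> a" "a < b" "b \<le> N"
  shows "x a < x b"
  using ab
proof (induction b)
  case 0 thus ?case by simp
next
  case (Suc b)
  show ?case
  proof (cases "a = b")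
    case True thus ?thesis using g Suc.prems by auto
  next
    case False
    hence "x a < x b" using Suc by auto
    moreover have "b \<in> {1..<N}" using Suc.prems False by auto
    ultimately show ?thesis using g by force
  qed
qed

lemma sgn_ordered:
  fixes x :: "nat \<Rightarrow> real"
  assumes g: "\<forall>i\<in>{1..<N}. x i < x (Suc i)" and i: "i \<in> {1..N}" and j: "j \<in> {1..N}"
  shows "sgn (x j - x i) = sgn (real j - real i)"
proof (cases "i < j")
  case True
  have "x i < x j" by (rule ordered_strict[OF g _ True]) (use i j in auto)
  thus ?thesis using True by simp
next
  case False
  show ?thesis
  proof (cases "j < i")
    case True
    have "x j < x i" by (rule ordered_strict[OF g _ True]) (use i j in auto)
    thus ?thesis using True by simp
  qed (use False in simp)
qed

lemma flow_field_alt: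
  "flow_field m chi N x k =
     (if k<N then - ((x (Suc k) - x k) powr (-m)) else 0)
   + (if 1<k then (\<lambda>i. (x (Suc i) - x i) powr (-m)) (k-1) else 0)
   + 2*chi*(\<Sum>j\<in>{1..N}-{k}. sgn(real j - real k) * (\<lambda>i j. \<bar>x j - x i\<bar> powr (-m)) k j)"
  unfolding flow_field_def by (cases "1 < k") auto

lemma energy_deriv:
  fixes X :: "real \<Rightarrow> nat \<Rightarrow> real"
  assumes m: "m > 1" and ord: "\<forall>i\<in>{1..<N}. X t i < X t (Suc i)"
    and d: "\<And>i. i \<in> {1..N} \<Longrightarrow> ((\<lambda>s. X s i) has_real_derivative a i) (at t within S)"
    and a: "\<And>i. i \<in> {1..N} \<Longrightarrow> a i = flow_field m chi N (X t) i"
  shows "((\<lambda>s. Esum m chi N (X s)) has_real_derivative (1-m) * (\<Sum>k=1..N. (a k)^2)) (at t within S)"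
proof -
  define g where "g i = (X t (Suc i) - X t i) powr (-m)" for i
  define e where "e i j = \<bar>X t j - X t i\<bar> powr (-m)" for i j
  have dg: "((\<lambda>s. (X s (Suc i) - X s i) powr (1-m)) has_real_derivative (1-m) * g i * (a (Suc i) - a i)) (at t within S)"
    if i: "i \<in> {1..<N}" for i
  proof -
    have pos: "X t (Suc i) - X t i > 0" using ord i by auto
    have "((\<lambda>s. (X s (Suc i) - X s i) powr (1-m)) has_real_derivative
           ((1-m) * (X t (Suc i) - X t i) powr (1-m-1)) * (a (Suc i) - a i)) (at t within S)"
      by (rule DERIV_chain2[OF has_real_derivative_powr[OF pos] DERIV_diff[OF d d]]) (use i in auto)
    thus ?thesis unfolding g_def by (simp add: mult.assoc)
  qed
  have de: "((\<lambda>s. \<bar>X s j - X s i\<bar> powr (1-m)) has_real_derivative (1-m) * (sgn (real j - real i) * e i j * (a j - a i))) (at t within S)"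
    if i: "i \<in> {1..N}" and j: "j \<in> {1..N} - {i}" for i j
  proof -
    have ne: "X t j - X t i \<noteq> 0"
    proof
      assume "X t j - X t i = 0"
      hence "sgn (X t j - X t i) = 0" by simp
      moreover have "sgn (X t j - X t i) = sgn (real j - real i)" by (rule sgn_ordered[OF ord i]) (use j in auto)
      ultimately show False using j by (simp add: sgn_0_0)
    qed
    have "((\<lambda>s. \<bar>X s j - X s i\<bar> powr (1-m)) has_real_derivative
           ((1-m) * \<bar>X t j - X t i\<bar> powr (1-m-1) * sgn (X t j - X t i)) * (a j - a i)) (at t within S)"
      by (rule DERIV_chain2[OF DERIV_abs_powr[OF ne] DERIV_diff[OF d d]]) (use i j in auto)
    moreover have "sgn (X t j - X t i) = sgn (real j - real i)" by (rule sgn_ordered[OF ord i]) (use j in auto)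
    ultimately show ?thesis unfolding e_def by (simp add: mult_ac)
  qed
  have D: "((\<lambda>s. Esum m chi N (X s)) has_real_derivative
      (\<Sum>i\<in>{1..<N}. (1-m) * g i * (a (Suc i) - a i))
      - chi * (\<Sum>i\<in>{1..N}. \<Sum>j\<in>{1..N} - {i}. (1-m) * (sgn (real j - real i) * e i j * (a j - a i)))) (at t within S)"
    unfolding Esum_def by (intro DERIV_diff DERIV_cmult DERIV_sum dg de) auto
  have esym: "e i j = e j i" for i j unfolding e_def by (simp add: abs_minus_commute)
  have KI: "(\<Sum>k=1..N. ((if k<N then - g k else 0) + (if 1<k then g (k-1) else 0)
            + 2*chi*(\<Sum>j\<in>{1..N}-{k}. sgn(real j - real k) * e k j)) * a k)
        = (\<Sum>i\<in>{1..<N}. g i * (a (Suc i) - a i))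
          - chi * (\<Sum>i=1..N. \<Sum>j\<in>{1..N}-{i}. sgn(real j - real i) * e i j * (a j - a i))"
    by (rule key_identity[OF esym])
  have fa: "((if k<N then - g k else 0) + (if 1<k then g (k-1) else 0)
            + 2*chi*(\<Sum>j\<in>{1..N}-{k}. sgn(real j - real k) * e k j)) = a k" if "k \<in> {1..N}" for k
    using a[OF that] unfolding flow_field_alt g_def e_def by simp
  have val: "(\<Sum>i\<in>{1..<N}. (1-m) * g i * (a (Suc i) - a i))
      - chi * (\<Sum>i\<in>{1..N}. \<Sum>j\<in>{1..N} - {i}. (1-m) * (sgn (real j - real i) * e i j * (a j - a i)))
      = (1-m) * (\<Sum>k=1..N. (a k)^2)"
  proof -
    have "(\<Sum>i\<in>{1..<N}. (1-m) * g i * (a (Suc i) - a i))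
      - chi * (\<Sum>i\<in>{1..N}. \<Sum>j\<in>{1..N} - {i}. (1-m) * (sgn (real j - real i) * e i j * (a j - a i)))
      = (1-m) * ((\<Sum>i\<in>{1..<N}. g i * (a (Suc i) - a i))
          - chi * (\<Sum>i=1..N. \<Sum>j\<in>{1..N}-{i}. sgn(real j - real i) * e i j * (a j - a i)))"
      by (simp add: sum_distrib_left right_diff_distrib mult.assoc mult.left_commute)
    also have "\<dots> = (1-m) * (\<Sum>k=1..N. a k * a k)" unfolding KI[symmetric]
      by (rule arg_cong[where f="\<lambda>u. (1-m) * u"], rule sum.cong[OF refl]) (simp only: fa)
    finally show ?thesis by (simp add: power2_eq_square)
  qed
  show ?thesis using D unfolding val .
qed


definition Dsum :: "real \<Rightarrow> nat \<Rightarrow> (nat \<Rightarrow> real) \<Rightarrow> real" where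
  "Dsum m N x = (\<Sum>i\<in>{1..<N}. (x (Suc i) - x i) powr (1-m))"
definition Nsum :: "real \<Rightarrow> nat \<Rightarrow> (nat \<Rightarrow> real) \<Rightarrow> real" where
  "Nsum m N x = (\<Sum>i\<in>{1..N}. \<Sum>j\<in>{1..N} - {i}. \<bar>x j - x i\<bar> powr (1-m))"

lemma Esum_eq: "Esum m chi N x = Dsum m N x - chi * Nsum m N x"
  unfolding Esum_def Dsum_def Nsum_def ..

lemma ratio_eq: "ratio_C m N x = Nsum m N x / Dsum m N x"
  unfolding ratio_C_def Dsum_def Nsum_def ..

lemma nonincr:
  fixes f f' :: "real \<Rightarrow> real"
  assumes ab: "a \<le> b" and d: "\<And>s. s \<in> {a..b} \<Longrightarrow> (f has_real_derivative f' s) (at s within {a..b})"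
    and B: "\<And>s. s \<in> {a..b} \<Longrightarrow> f' s \<le> 0"
  shows "f b \<le> f a"
proof (cases "a = b")
  case True thus ?thesis by simp
next
  case False
  hence lt: "a < b" using ab by simp
  have dat: "(f has_real_derivative f' s) (at s)" if "a < s" "s < b" for s
  proof -
    have "s \<in> interior {a..b}" using that by simp
    hence "at s within {a..b} = at s" by (rule at_within_interior)
    thus ?thesis using d[of s] that by simp
  qed
  have "continuous_on {a..b} f" by (rule DERIV_continuous_on[OF d])
  then obtain l z where z: "a < z" "z < b" "DERIV f z :> l" "f b - f a = (b - a) * l"
    using MVT[OF lt] dat by (meson real_differentiable_def)
  have "l = f' z" using DERIV_unique[OF z(3) dat[OF z(1,2)]] .
  hence "l \<le> 0" using B[of z] z by simp
  have "(b - a) * l \<le> 0" by (rule mult_nonneg_nonpos) (use lt \<open>l \<le> 0\<close> in auto)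
  thus ?thesis using z(4) by linarith
qed

lemma conf_strict: "x \<in> ordered_conf N \<Longrightarrow> \<forall>i\<in>{1..<N}. x i < x (Suc i)"
  unfolding ordered_conf_def by auto

lemma Dsum_pos:
  assumes x: "x \<in> ordered_conf N" and N: "N \<ge> 2"
  shows "Dsum m N x > 0"
  unfolding Dsum_def
proof (rule sum_pos)
  show "finite {1..<N}" by simp
  show "{1..<N} \<noteq> {}" using N by auto
  fix i assume "i \<in> {1..<N}"
  hence "x i < x (Suc i)" using conf_strict[OF x] by blast
  thus "0 < (x (Suc i) - x i) powr (1-m)" by simp
qed

lemma gap_term_le_Dsum:
  assumes x: "x \<in> ordered_conf N" and k: "k \<in> {1..<N}"
  shows "(x (Suc k) - x k) powr (1-m) \<le> Dsum m N x"
  unfolding Dsum_def by (rule member_le_sum[OF k]) auto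

lemma Nsum_le:
  assumes x: "x \<in> ordered_conf N" and m: "m > 1"
  shows "Nsum m N x \<le> real N * real N * Dsum m N x"
proof -
  have g0: "\<forall>i\<in>{1..<N}. x i + 0 \<le> x (Suc i)" using conf_strict[OF x] by auto
  have tm: "\<bar>x j - x i\<bar> powr (1-m) \<le> Dsum m N x" if i: "i \<in> {1..N}" and j: "j \<in> {1..N} - {i}" for i j
  proof -
    obtain k where k: "k \<in> {1..<N}" and kle: "x (Suc k) - x k \<le> \<bar>x j - x i\<bar>"
    proof (cases "i < j")
      case True
      have "x (Suc i) \<le> x j"
      proof (cases "Suc i = j")
        case False
        hence "Suc i < j" using True by simp
        thus ?thesis using ordered_mono[OF g0 _ _ \<open>Suc i < j\<close>] j by simp
      qed simp
      moreover have "x i < x j" by (rule ordered_strict[OF conf_strict[OF x] _ True]) (use i j in auto)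
      ultimately show ?thesis using that[of i] i j True by auto
    next
      case False
      hence ji: "j < i" using j by auto
      have "x (Suc j) \<le> x i"
      proof (cases "Suc j = i")
        case False
        hence "Suc j < i" using ji by simp
        thus ?thesis using ordered_mono[OF g0 _ _ \<open>Suc j < i\<close>] i j by simp
      qed simp
      moreover have "x j < x i" by (rule ordered_strict[OF conf_strict[OF x] _ ji]) (use i j in auto)
      ultimately show ?thesis using that[of j] i j ji by auto
    qed
    have gp: "0 < x (Suc k) - x k" using conf_strict[OF x] k by auto
    have "\<bar>x j - x i\<bar> powr (1-m) \<le> (x (Suc k) - x k) powr (1-m)"
      by (rule powr_mono2') (use m gp kle in auto)
    also have "\<dots> \<le> Dsum m N x" by (rule gap_term_le_Dsum[OF x k])
    finally show ?thesis .
  qed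
  have "Nsum m N x \<le> (\<Sum>i\<in>{1..N}. \<Sum>j\<in>{1..N} - {i}. Dsum m N x)"
    unfolding Nsum_def by (intro sum_mono tm)
  also have "\<dots> \<le> (\<Sum>i\<in>{1..N}. real N * Dsum m N x)"
  proof (rule sum_mono)
    fix i assume i: "i \<in> {1..N}"
    have "card ({1..N} - {i}) \<le> N" using i by (simp add: card_Diff_singleton)
    moreover have "0 \<le> Dsum m N x"
      unfolding Dsum_def by (rule sum_nonneg) simp
    ultimately show "(\<Sum>j\<in>{1..N} - {i}. Dsum m N x) \<le> real N * Dsum m N x"
      by (simp add: mult_right_mono)
  qed
  also have "\<dots> = real N * real N * Dsum m N x" by simp
  finally show ?thesis .
qed

lemma ratio_bdd:
  assumes m: "m > 1" and N: "N \<ge> 2"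
  shows "bdd_above (ratio_C m N ` ordered_conf N)"
proof (rule bdd_aboveI2)
  fix x assume x: "x \<in> ordered_conf N"
  have "Dsum m N x > 0" by (rule Dsum_pos[OF x N])
  thus "ratio_C m N x \<le> real N * real N"
    unfolding ratio_eq using Nsum_le[OF x m] by (simp add: divide_le_eq mult.commute)
qed

lemma energy_lower:
  assumes m: "m > 1" and N: "N \<ge> 2" and chi: "chi > 0" and C: "chi < C_const m N"
    and x: "x \<in> ordered_conf N"
  shows "Dsum m N x * (1 - chi / C_const m N) \<le> Esum m chi N x" and "0 < 1 - chi / C_const m N"
proof -
  define S where "S = (SUP y\<in>ordered_conf N. ratio_C m N y)"
  have Cpos: "C_const m N > 0" using chi C by simp
  have Cdef: "C_const m N = 1 / S" unfolding C_const_def S_def ..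
  have Spos: "S > 0" using Cpos Cdef by (simp add: zero_less_divide_iff)
  have SC: "S = 1 / C_const m N" using Cdef Spos by simp
  have r: "ratio_C m N x \<le> S" unfolding S_def by (rule cSUP_upper[OF x ratio_bdd[OF m N]])
  have Dp: "Dsum m N x > 0" by (rule Dsum_pos[OF x N])
  have "Nsum m N x \<le> S * Dsum m N x" using r Dp unfolding ratio_eq by (simp add: divide_le_eq)
  hence "chi * Nsum m N x \<le> chi * (S * Dsum m N x)" using chi by (simp add: mult_left_mono)
  thus "Dsum m N x * (1 - chi / C_const m N) \<le> Esum m chi N x"
    unfolding Esum_eq SC by (simp add: field_simps)
  show "0 < 1 - chi / C_const m N" using Cpos C by simp
qed

lemma flow_sum_zero: "(\<Sum>k=1..N. flow_field m chi N x k) = 0"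
proof -
  define g where "g i = (x (Suc i) - x i) powr (-m)" for i
  define e where "e i j = \<bar>x j - x i\<bar> powr (-m)" for i j
  have esym: "e i j = e j i" for i j unfolding e_def by (simp add: abs_minus_commute)
  have "(\<Sum>k=1..N. ((if k<N then - g k else 0) + (if 1<k then g (k-1) else 0)
            + 2*chi*(\<Sum>j\<in>{1..N}-{k}. sgn(real j - real k) * e k j)) * (\<lambda>_. 1) k)
        = (\<Sum>i\<in>{1..<N}. g i * ((\<lambda>_. 1) (Suc i) - (\<lambda>_. 1) i))
          - chi * (\<Sum>i=1..N. \<Sum>j\<in>{1..N}-{i}. sgn(real j - real i) * e i j * ((\<lambda>_. 1) j - (\<lambda>_. 1) i))"
    by (rule key_identity[OF esym])
  moreover have "flow_field m chi N x k = ((if k<N then - g k else 0) + (if 1<k then g (k-1) else 0)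
            + 2*chi*(\<Sum>j\<in>{1..N}-{k}. sgn(real j - real k) * e k j))" for k
    unfolding flow_field_alt g_def e_def by simp
  ultimately show ?thesis by simp
qed


definition bump :: "real \<Rightarrow> real" where "bump x = max 0 (1 - \<bar>x\<bar>)"

lemma bump_nonneg: "0 \<le> bump x" and bump_le1: "bump x \<le> 1"
  unfolding bump_def by auto

lemma bump_int: "bump (real i - real j) = (if i = j then 1 else 0)"
proof (cases "i = j")
  case False
  hence "\<bar>real i - real j\<bar> \<ge> 1" by (cases "i < j") auto
  thus ?thesis using False unfolding bump_def by simp
qed (simp add: bump_def)

definition embf :: "nat \<Rightarrow> (nat \<Rightarrow> real) \<Rightarrow> real \<Rightarrow> real" where
  "embf N f x = (\<Sum>j\<in>{1..N}. f j * bump (x - real j))"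

definition emb :: "nat \<Rightarrow> (nat \<Rightarrow> real) \<Rightarrow> (real \<Rightarrow>\<^sub>C real)" where
  "emb N f = Bcontfun (embf N f)"

lemma embf_in: "embf N f \<in> bcontfun"
proof (rule bcontfun_normI)
  show "continuous_on UNIV (embf N f)" unfolding embf_def bump_def by (intro continuous_intros)
  fix x
  have "\<bar>embf N f x\<bar> \<le> (\<Sum>j\<in>{1..N}. \<bar>f j * bump (x - real j)\<bar>)" unfolding embf_def by (rule sum_abs)
  also have "\<dots> \<le> (\<Sum>j\<in>{1..N}. \<bar>f j\<bar>)"
    by (rule sum_mono) (simp add: abs_mult bump_nonneg bump_le1 mult_left_le)
  finally show "norm (embf N f x) \<le> (\<Sum>j\<in>{1..N}. \<bar>f j\<bar>)" by simp
qed

lemma emb_apply_gen: "apply_bcontfun (emb N f) x = embf N f x"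
  unfolding emb_def using embf_in by (simp add: Bcontfun_inverse)

lemma emb_apply: "apply_bcontfun (emb N f) (real i) = (if i \<in> {1..N} then f i else 0)"
proof -
  have "apply_bcontfun (emb N f) (real i) = (\<Sum>j\<in>{1..N}. f j * (if i = j then 1 else 0))"
    unfolding emb_apply_gen embf_def bump_int ..
  also have "\<dots> = (\<Sum>j\<in>{1..N}. if j = i then f j else 0)" by (intro sum.cong) auto
  also have "\<dots> = (if i \<in> {1..N} then f i else 0)" by (simp add: sum.delta)
  finally show ?thesis .
qed

lemma emb_lip:
  assumes "\<forall>j\<in>{1..N}. \<bar>f j - g j\<bar> \<le> D"
  shows "norm (emb N f - emb N g) \<le> real N * D"
proof (rule norm_bound)
  fix x
  have "apply_bcontfun (emb N f - emb N g) x = (\<Sum>j\<in>{1..N}. (f j - g j) * bump (x - real j))"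
    by (simp add: emb_apply_gen embf_def sum_subtractf[symmetric] left_diff_distrib)
  also have "\<bar>\<dots>\<bar> \<le> (\<Sum>j\<in>{1..N}. \<bar>(f j - g j) * bump (x - real j)\<bar>)" by (rule sum_abs)
  also have "\<dots> \<le> (\<Sum>j\<in>{1..N}. D)"
  proof (rule sum_mono)
    fix j assume j: "j \<in> {1..N}"
    have "\<bar>(f j - g j) * bump (x - real j)\<bar> = \<bar>f j - g j\<bar> * bump (x - real j)"
      by (simp add: abs_mult bump_nonneg)
    also have "\<dots> \<le> \<bar>f j - g j\<bar> * 1" by (intro mult_left_mono bump_le1) simp
    also have "\<dots> \<le> D" using assms j by simp
    finally show "\<bar>(f j - g j) * bump (x - real j)\<bar> \<le> D" .
  qed
  also have "\<dots> = real N * D" by simp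
  finally show "norm (apply_bcontfun (emb N f - emb N g) x) \<le> real N * D" by simp
qed

lemma bl_proj: "bounded_linear (\<lambda>u::(real \<Rightarrow>\<^sub>C real). apply_bcontfun u x)"
proof (rule bounded_linear_intro[where K=1])
  show "apply_bcontfun (a + b) x = apply_bcontfun a x + apply_bcontfun b x" for a b by simp
  show "apply_bcontfun (r *\<^sub>R a) x = r *\<^sub>R apply_bcontfun a x" for r a by simp
  show "norm (apply_bcontfun a x) \<le> norm a * 1" for a using norm_bounded[of a x] by simp
qed

lemma proj_deriv:
  fixes y :: "real \<Rightarrow> (real \<Rightarrow>\<^sub>C real)"
  assumes "(y has_vector_derivative v) (at t within S)"
  shows "((\<lambda>s. apply_bcontfun (y s) x) has_real_derivative apply_bcontfun v x) (at t within S)"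
  using bounded_linear.has_vector_derivative[OF bl_proj assms]
  by (simp add: has_real_derivative_iff_has_vector_derivative)

instance bcontfun :: (metric_space, banach) banach ..

lemma picard_inst:
  fixes G :: "(real \<Rightarrow>\<^sub>C real) \<Rightarrow> (real \<Rightarrow>\<^sub>C real)"
  assumes "\<And>x y. norm (G x - G y) \<le> L * norm (x - y)" "0 \<le> L" "0 < h" "L * h < 1"
  shows "\<exists>y. y t0 = z \<and> (\<forall>t\<in>{t0..t0+h}. (y has_vector_derivative G (y t)) (at t within {t0..t0+h}))"
  by (rule picard[OF assms])


theorem theorem1p3:
  fixes m chi :: real and N :: nat and X0 :: "nat \<Rightarrow> real"
    and T :: ereal and X :: "real \<Rightarrow> nat \<Rightarrow> real"
  assumes "m > 1" and "chi > 0" and "N \<ge> 2"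
    and "chi < C_const m N"
    and "X0 \<in> ordered_conf N"
    and "maximal_flow_solution m chi N X0 T X"
  shows "T = \<infinity>"
proof (rule ccontr)
  assume nT: "T \<noteq> \<infinity>"
  note m = assms(1) and chi = assms(2) and N2 = assms(3) and Cc = assms(4)
  have sol: "flow_solution m chi N X0 T X"
    and nomax: "\<not> (\<exists>T' Y. T < T' \<and> flow_solution m chi N X0 T' Y \<and>
          (\<forall>t. 0 \<le> t \<and> ereal t < T \<longrightarrow> (\<forall>i\<in>{1..N}. Y t i = X t i)))"
    using assms(6) unfolding maximal_flow_solution_def by auto
  from sol have T0: "0 < T" and init: "\<forall>i\<in>{1..N}. X 0 i = X0 i"
    and ev: "\<forall>t. 0 \<le> t \<and> ereal t < T \<longrightarrow> X t \<in> ordered_conf N \<and>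
        (\<forall>i\<in>{1..N}. ((\<lambda>s. X s i) has_real_derivative flow_field m chi N (X t) i)
                        (at t within {s. 0 \<le> s \<and> ereal s < T}))"
    unfolding flow_solution_def by auto
  obtain \<tau> where T: "T = ereal \<tau>" using nT T0 by (cases T) auto
  have tau0: "0 < \<tau>" using T0 T by simp
  have Seq: "{s. 0 \<le> s \<and> ereal s < T} = {0..<\<tau>}" using T by auto
  have Xconf: "X t \<in> ordered_conf N" if "t \<in> {0..<\<tau>}" for t using ev T that by auto
  have Xder: "((\<lambda>s. X s i) has_real_derivative flow_field m chi N (X t) i) (at t within {0..<\<tau>})"
    if "t \<in> {0..<\<tau>}" "i \<in> {1..N}" for t i using ev T that Seq by auto
  have mpos: "0 < m" using m by simp

  define E0 where "E0 = Esum m chi N (X 0)"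
  have Ebound: "Esum m chi N (X t) \<le> E0" if t: "t \<in> {0..<\<tau>}" for t
  proof -
    have "Esum m chi N (X t) \<le> Esum m chi N (X 0)"
    proof (rule nonincr[where f="\<lambda>s. Esum m chi N (X s)" and a=0 and b=t and f'="\<lambda>s. (1-m) * (\<Sum>k=1..N. (flow_field m chi N (X s) k)^2)"])
      show "0 \<le> t" using t by simp
      fix s assume s: "s \<in> {0..t}"
      hence s': "s \<in> {0..<\<tau>}" using t by auto
      have "((\<lambda>s. Esum m chi N (X s)) has_real_derivative (1-m) * (\<Sum>k=1..N. (flow_field m chi N (X s) k)^2)) (at s within {0..<\<tau>})"
        by (rule energy_deriv[where X=X and t=s and a="\<lambda>i. flow_field m chi N (X s) i" and S="{0..<\<tau>}", OF m conf_strict[OF Xconf[OF s']]])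
           (auto intro: Xder[OF s'])
      thus "((\<lambda>s. Esum m chi N (X s)) has_real_derivative (1-m) * (\<Sum>k=1..N. (flow_field m chi N (X s) k)^2)) (at s within {0..t})"
        by (rule DERIV_subset) (use t in auto)
      show "(1-m) * (\<Sum>k=1..N. (flow_field m chi N (X s) k)^2) \<le> 0"
        using m by (intro mult_nonpos_nonneg sum_nonneg) auto
    qed
    thus ?thesis unfolding E0_def .
  qed
  define \<kappa> where "\<kappa> = 1 - chi / C_const m N"
  have kpos: "0 < \<kappa>" unfolding \<kappa>_def using energy_lower(2)[OF m N2 chi Cc Xconf[of 0]] tau0 by simp
  define K where "K = E0 / \<kappa>"
  have Dle: "Dsum m N (X t) \<le> K" if t: "t \<in> {0..<\<tau>}" for t
  proof -
    have "Dsum m N (X t) * \<kappa> \<le> E0"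
      using energy_lower(1)[OF m N2 chi Cc Xconf[OF t]] Ebound[OF t] unfolding \<kappa>_def by linarith
    thus ?thesis unfolding K_def using kpos by (simp add: pos_le_divide_eq)
  qed
  have x0: "0 \<in> {0..<\<tau>}" using tau0 by simp
  have Kpos: "0 < K" using Dle[OF x0] Dsum_pos[OF Xconf[OF x0] N2, of m] by linarith
  define \<delta> where "\<delta> = K powr (1/(1-m))"
  have dpos: "0 < \<delta>" unfolding \<delta>_def using Kpos by simp
  have gapd: "X t k + \<delta> \<le> X t (Suc k)" if t: "t \<in> {0..<\<tau>}" and k: "k \<in> {1..<N}" for t k
  proof -
    define u where "u = X t (Suc k) - X t k"
    have upos: "0 < u" unfolding u_def using conf_strict[OF Xconf[OF t]] k by auto
    have "u powr (1-m) \<le> Dsum m N (X t)" unfolding u_def by (rule gap_term_le_Dsum[OF Xconf[OF t] k])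
    hence uK: "u powr (1-m) \<le> K" using Dle[OF t] by linarith
    have "K powr (1/(1-m)) \<le> (u powr (1-m)) powr (1/(1-m))"
      by (rule powr_mono2') (use m upos uK in auto)
    also have "\<dots> = u" using m upos by (simp add: powr_powr)
    finally show ?thesis unfolding \<delta>_def u_def by simp
  qed
  define c where "c = \<delta> / 2"
  have cpos: "0 < c" unfolding c_def using dpos by simp
  define L where "L = m * c powr (-m-1) * (4 + 4*chi*N)"
  define B where "B = c powr (-m) * (2 + 2*chi*N)"
  have L0: "0 \<le> L" unfolding L_def using mpos chi by simp
  have B0: "0 \<le> B" unfolding B_def using chi by simp
  define h where "h = min (1 / (2 * (real N * L + L + 1))) (c / (2 * (B + 1)))"
  have NL0: "0 \<le> real N * L" using L0 by simp
  have den: "0 < 2 * (real N * L + L + 1)" using add_nonneg_pos[OF add_nonneg_nonneg[OF NL0 L0] zero_less_one] by simp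
  have hpos: "0 < h" unfolding h_def using den B0 cpos by simp
  have hle1: "(real N * L + L + 1) * h \<le> 1/2"
  proof -
    have "h \<le> 1 / (2 * (real N * L + L + 1))" unfolding h_def by simp
    hence "(real N * L + L + 1) * h \<le> (real N * L + L + 1) * (1 / (2 * (real N * L + L + 1)))"
      using den by (intro mult_left_mono) auto
    moreover have "(real N * L + L + 1) * (1 / (2 * (real N * L + L + 1))) = 1/2" using den by simp
    ultimately show ?thesis by (rule ord_le_eq_trans)
  qed
  have ex: "(real N * L + L + 1) * h = real N * L * h + L * h + h" by (simp add: distrib_right)
  have p1: "0 \<le> real N * L * h" using NL0 hpos by simp
  have p2: "0 \<le> L * h" using L0 hpos by simp
  have Lh: "L * h < 1" using hle1 ex p1 p2 hpos by linarith
  have NLh: "real N * L * h < 1" using hle1 ex p1 p2 hpos by linarith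
  have Bh: "2 * B * h \<le> c"
  proof -
    have "h \<le> c / (2 * (B + 1))" unfolding h_def by simp
    hence "2 * B * h \<le> 2 * B * (c / (2 * (B + 1)))" using B0 by (intro mult_left_mono) auto
    also have "\<dots> = c * (B / (B + 1))" using B0 by (simp add: field_simps)
    also have "\<dots> \<le> c * 1" using B0 cpos by (intro mult_left_mono) auto
    finally show ?thesis by simp
  qed
  define t1 where "t1 = max 0 (\<tau> - h/2)"
  have t1S: "t1 \<in> {0..<\<tau>}" unfolding t1_def using tau0 hpos by auto
  have t1h: "\<tau> < t1 + h" unfolding t1_def using hpos by auto
  define G where "G u = emb N (ffc m chi N c (\<lambda>i. apply_bcontfun u (real i)))" for u :: "real \<Rightarrow>\<^sub>C real"
  have Glip: "norm (G u - G v) \<le> (real N * L) * norm (u - v)" for u v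
  proof -
    have "norm (G u - G v) \<le> real N * (L * norm (u - v))"
      unfolding G_def
    proof (rule emb_lip, rule ballI)
      fix i assume i: "i \<in> {1..N}"
      show "\<bar>ffc m chi N c (\<lambda>i. apply_bcontfun u (real i)) i - ffc m chi N c (\<lambda>i. apply_bcontfun v (real i)) i\<bar> \<le> L * norm (u - v)"
        unfolding L_def
      proof (rule ffc_lip[OF cpos mpos _ i])
        show "0 \<le> chi" using chi by simp
        show "\<forall>j\<in>{1..N}. \<bar>apply_bcontfun u (real j) - apply_bcontfun v (real j)\<bar> \<le> norm (u - v)"
          using norm_bounded[of "u - v"] by simp
      qed
    qed
    thus ?thesis by (simp add: mult.assoc)
  qed
  have NL0': "0 \<le> real N * L" using NL0 .
  obtain y where y0: "y t1 = emb N (X t1)"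
    and yd: "\<forall>t\<in>{t1..t1+h}. (y has_vector_derivative G (y t)) (at t within {t1..t1+h})"
    using picard_inst[OF Glip NL0' hpos NLh, of t1 "emb N (X t1)"] by blast
  define W where "W s i = apply_bcontfun (y s) (real i)" for s i
  have Wd: "((\<lambda>s. W s i) has_real_derivative ffc m chi N c (W t) i) (at t within {t1..t1+h})"
    if t: "t \<in> {t1..t1+h}" and i: "i \<in> {1..N}" for t i
  proof -
    have "((\<lambda>s. apply_bcontfun (y s) (real i)) has_real_derivative apply_bcontfun (G (y t)) (real i)) (at t within {t1..t1+h})"
      by (rule proj_deriv) (use yd t in auto)
    moreover have "apply_bcontfun (G (y t)) (real i) = ffc m chi N c (W t) i"
      using i by (simp add: G_def emb_apply W_def[abs_def])
    ultimately show ?thesis unfolding W_def by simp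
  qed
  have W1: "W t1 i = X t1 i" if "i \<in> {1..N}" for i using that y0 by (simp add: W_def emb_apply)
  have Wclose: "\<bar>W t i - X t1 i\<bar> \<le> B * h" if t: "t \<in> {t1..t1+h}" and i: "i \<in> {1..N}" for t i
  proof -
    have "\<bar>W t i - W t1 i\<bar> \<le> B * (t - t1)"
    proof (rule bound_diff[where f'="\<lambda>s. ffc m chi N c (W s) i"])
      show "t1 \<le> t" using t by simp
      fix s assume s: "s \<in> {t1..t}"
      have "((\<lambda>s. W s i) has_real_derivative ffc m chi N c (W s) i) (at s within {t1..t1+h})"
        by (rule Wd[OF _ i]) (use s t in auto)
      thus "((\<lambda>s. W s i) has_real_derivative ffc m chi N c (W s) i) (at s within {t1..t})"
        by (rule DERIV_subset) (use t in auto)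
      show "\<bar>ffc m chi N c (W s) i\<bar> \<le> B" unfolding B_def by (rule ffc_bound[OF cpos mpos]) (use chi in simp)
    qed
    also have "\<dots> \<le> B * h" using t B0 by (intro mult_left_mono) auto
    finally show ?thesis using W1[OF i] by simp
  qed
  have Wgap: "W t k + c \<le> W t (Suc k)" if t: "t \<in> {t1..t1+h}" and k: "k \<in> {1..<N}" for t k
  proof -
    have k1: "k \<in> {1..N}" and k2: "Suc k \<in> {1..N}" using k by auto
    have "X t1 k + \<delta> \<le> X t1 (Suc k)" by (rule gapd[OF t1S k])
    moreover have "\<delta> = 2 * c" unfolding c_def by simp
    ultimately show ?thesis using Wclose[OF t k1] Wclose[OF t k2] Bh by linarith
  qed
  have Wff: "ffc m chi N c (W t) i = flow_field m chi N (W t) i" if t: "t \<in> {t1..t1+h}" and i: "i \<in> {1..N}" for t i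
    by (rule ffc_eq[OF _ cpos i]) (use Wgap[OF t] in auto)
  have Xff: "ffc m chi N c (X t) i = flow_field m chi N (X t) i" if t: "t \<in> {0..<\<tau>}" and i: "i \<in> {1..N}" for t i
  proof (rule ffc_eq[OF _ cpos i])
    show "\<forall>k\<in>{1..<N}. X t k + c \<le> X t (Suc k)"
    proof
      fix k assume k: "k \<in> {1..<N}"
      show "X t k + c \<le> X t (Suc k)" using gapd[OF t k] dpos unfolding c_def by linarith
    qed
  qed
  have ht: "t1 + h > \<tau>" using t1h .
  have uniq: "X t i = W t i" if t: "t \<in> {t1..<\<tau>}" and i: "i \<in> {1..N}" for t i
  proof -
    define e where "e s j = X s j - W s j" for s j
    have sub1: "{t1..t} \<subseteq> {0..<\<tau>}" using t t1S by auto
    have sub2: "{t1..t} \<subseteq> {t1..t1+h}" using t ht by auto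
    have ed: "((\<lambda>s. e s j) has_real_derivative ffc m chi N c (X s) j - ffc m chi N c (W s) j) (at s within {t1..t})"
      if s: "s \<in> {t1..t}" and j: "j \<in> {1..N}" for s j
    proof -
      have "((\<lambda>s. X s j) has_real_derivative flow_field m chi N (X s) j) (at s within {t1..t})"
        by (rule DERIV_subset[OF Xder sub1]) (use s sub1 j in auto)
      moreover have "((\<lambda>s. W s j) has_real_derivative ffc m chi N c (W s) j) (at s within {t1..t})"
        by (rule DERIV_subset[OF Wd sub2]) (use s sub2 j in auto)
      ultimately have "((\<lambda>s. X s j - W s j) has_real_derivative flow_field m chi N (X s) j - ffc m chi N c (W s) j) (at s within {t1..t})"
        by (rule DERIV_diff)
      moreover have "flow_field m chi N (X s) j = ffc m chi N c (X s) j" using Xff[of s j] s sub1 j by auto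
      ultimately show ?thesis unfolding e_def by simp
    qed
    define d where "d s = (\<Sum>j\<in>{1..N}. \<bar>e s j\<bar>)" for s
    have econt: "continuous_on {t1..t} (\<lambda>s. e s j)" if "j \<in> {1..N}" for j
      by (rule DERIV_continuous_on[OF ed]) (use that in auto)
    have dcont: "continuous_on {t1..t} d" unfolding d_def
      by (intro continuous_on_sum continuous_on_rabs econt) auto
    obtain s0 where s0: "s0 \<in> {t1..t}" and dmax: "\<forall>s\<in>{t1..t}. d s \<le> d s0"
      using continuous_attains_sup[OF compact_Icc _ dcont] t by auto
    define D where "D = d s0"
    have D0: "0 \<le> D" unfolding D_def d_def by (rule sum_nonneg) simp
    have eleD: "\<bar>e s j\<bar> \<le> D" if s: "s \<in> {t1..t}" and j: "j \<in> {1..N}" for s j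
    proof -
      have "\<bar>e s j\<bar> \<le> d s" unfolding d_def by (rule member_le_sum[OF j]) auto
      thus ?thesis using dmax s unfolding D_def by force
    qed
    have ebound: "\<bar>e s j\<bar> \<le> L * D * h" if s: "s \<in> {t1..t}" and j: "j \<in> {1..N}" for s j
    proof -
      have "\<bar>e s j - e t1 j\<bar> \<le> (L * D) * (s - t1)"
      proof (rule bound_diff[where f'="\<lambda>r. ffc m chi N c (X r) j - ffc m chi N c (W r) j"])
        show "t1 \<le> s" using s by simp
        fix r assume r: "r \<in> {t1..s}"
        have rt: "r \<in> {t1..t}" using r s by auto
        show "((\<lambda>s. e s j) has_real_derivative ffc m chi N c (X r) j - ffc m chi N c (W r) j) (at r within {t1..s})"
          by (rule DERIV_subset[OF ed[OF rt j]]) (use s in auto)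
        show "\<bar>ffc m chi N c (X r) j - ffc m chi N c (W r) j\<bar> \<le> L * D"
          unfolding L_def
        proof (rule ffc_lip[OF cpos mpos _ j])
          show "0 \<le> chi" using chi by simp
          show "\<forall>k\<in>{1..N}. \<bar>X r k - W r k\<bar> \<le> D" using eleD[OF rt] unfolding e_def by blast
        qed
      qed
      moreover have "e t1 j = 0" unfolding e_def using W1[OF j] by simp
      moreover have "(L * D) * (s - t1) \<le> (L * D) * h" using s t ht L0 D0 by (intro mult_left_mono) auto
      ultimately show ?thesis by simp
    qed
    have "D \<le> (\<Sum>j\<in>{1..N}. L * D * h)" unfolding D_def d_def
      by (rule sum_mono) (use ebound[OF s0] in \<open>auto simp: D_def d_def\<close>)
    also have "\<dots> = (real N * L * h) * D" by (simp add: mult_ac)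
    finally have "D \<le> (real N * L * h) * D" .
    hence "D * (1 - real N * L * h) \<le> 0" by (simp add: algebra_simps)
    hence "D \<le> 0" using NLh by (simp add: mult_le_0_iff)
    hence "\<bar>e t i\<bar> \<le> 0" using eleD[of t i] t i by force
    thus ?thesis unfolding e_def by simp
  qed
  have Wconf: "W t \<in> ordered_conf N" if t: "t \<in> {t1..t1+h}" for t
  proof -
    have strict: "\<forall>k\<in>{1..<N}. W t k < W t (Suc k)"
    proof
      fix k assume k: "k \<in> {1..<N}"
      show "W t k < W t (Suc k)" using Wgap[OF t k] cpos by linarith
    qed
    have "\<bar>(\<Sum>i\<in>{1..N}. W t i) - (\<Sum>i\<in>{1..N}. W t1 i)\<bar> \<le> 0 * (t - t1)"
    proof (rule bound_diff[where f'="\<lambda>s. \<Sum>i\<in>{1..N}. ffc m chi N c (W s) i"])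
      show "t1 \<le> t" using t by simp
      fix s assume s: "s \<in> {t1..t}"
      have s': "s \<in> {t1..t1+h}" using s t by auto
      show "((\<lambda>s. \<Sum>i\<in>{1..N}. W s i) has_real_derivative (\<Sum>i\<in>{1..N}. ffc m chi N c (W s) i)) (at s within {t1..t})"
      proof (rule DERIV_sum)
        fix i assume i: "i \<in> {1..N}"
        show "((\<lambda>s. W s i) has_real_derivative ffc m chi N c (W s) i) (at s within {t1..t})"
          by (rule DERIV_subset[OF Wd[OF s' i]]) (use t in auto)
      qed
      have "(\<Sum>i\<in>{1..N}. ffc m chi N c (W s) i) = (\<Sum>i\<in>{1..N}. flow_field m chi N (W s) i)"
        by (rule sum.cong[OF refl]) (rule Wff[OF s'])
      also have "\<dots> = 0" using flow_sum_zero[of m chi N "W s"] by simp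
      finally show "\<bar>\<Sum>i\<in>{1..N}. ffc m chi N c (W s) i\<bar> \<le> 0" by simp
    qed
    moreover have "(\<Sum>i\<in>{1..N}. W t1 i) = (\<Sum>i\<in>{1..N}. X t1 i)" by (rule sum.cong[OF refl]) (rule W1)
    moreover have "(\<Sum>i\<in>{1..N}. X t1 i) = 0" using Xconf[OF t1S] unfolding ordered_conf_def by auto
    ultimately have "(\<Sum>i\<in>{1..N}. W t i) = 0" by simp
    thus ?thesis using strict unfolding ordered_conf_def by auto
  qed
  define Y where "Y s = (if s < \<tau> then X s else W s)" for s
  have setT: "{s. 0 \<le> s \<and> ereal s < ereal (t1+h)} = {0..<t1+h}" by auto
  have Yconf: "Y t \<in> ordered_conf N" if t: "t \<in> {0..<t1+h}" for t
  proof (cases "t < \<tau>")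
    case True thus ?thesis using Xconf[of t] t by (simp add: Y_def)
  next
    case False
    hence "t \<in> {t1..t1+h}" using t t1S by auto
    thus ?thesis using Wconf False by (simp add: Y_def)
  qed
  have Yder: "((\<lambda>s. Y s i) has_real_derivative flow_field m chi N (Y t) i) (at t within {0..<t1+h})"
    if t: "t \<in> {0..<t1+h}" and i: "i \<in> {1..N}" for t i
  proof (cases "t < \<tau>")
    case True
    have tS: "t \<in> {0..<\<tau>}" using True t by auto
    have "at t within {0..<\<tau>} = at t within {0..<t1+h}"
      by (rule at_within_nhd[of t "{..<\<tau>}"]) (use True ht in auto)
    hence d1: "((\<lambda>s. X s i) has_real_derivative flow_field m chi N (X t) i) (at t within {0..<t1+h})"
      using Xder[OF tS i] by simp
    have d2: "((\<lambda>s. Y s i) has_real_derivative flow_field m chi N (X t) i) (at t within {0..<t1+h})"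
    proof (rule has_field_derivative_transform_within[OF d1, of "\<tau> - t"])
      show "0 < \<tau> - t" using True by simp
      show "t \<in> {0..<t1+h}" using t .
      fix x assume "x \<in> {0..<t1+h}" "dist x t < \<tau> - t"
      hence "x < \<tau>" by (simp add: dist_real_def abs_less_iff)
      thus "X x i = Y x i" by (simp add: Y_def)
    qed
    thus ?thesis using True by (simp add: Y_def)
  next
    case False
    have tW: "t \<in> {t1..t1+h}" and tgt: "t1 < t" using t t1S False by auto
    have tW': "t \<in> {t1..<t1+h}" using t tW by auto
    have "((\<lambda>s. W s i) has_real_derivative ffc m chi N c (W t) i) (at t within {t1..<t1+h})"
      by (rule DERIV_subset[OF Wd[OF tW i]]) auto
    moreover have "at t within {t1..<t1+h} = at t within {0..<t1+h}"
      by (rule at_within_nhd[of t "{t1<..}"]) (use tgt t1S in auto)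
    ultimately have d1: "((\<lambda>s. W s i) has_real_derivative ffc m chi N c (W t) i) (at t within {0..<t1+h})"
      by simp
    have d2: "((\<lambda>s. Y s i) has_real_derivative ffc m chi N c (W t) i) (at t within {0..<t1+h})"
    proof (rule has_field_derivative_transform_within[OF d1, of "t - t1"])
      show "0 < t - t1" using tgt by simp
      show "t \<in> {0..<t1+h}" using t .
      fix x assume x: "x \<in> {0..<t1+h}" "dist x t < t - t1"
      hence xt1: "t1 < x" by (simp add: dist_real_def abs_less_iff)
      show "W x i = Y x i"
      proof (cases "x < \<tau>")
        case True
        hence "x \<in> {t1..<\<tau>}" using xt1 by auto
        thus ?thesis using uniq[of x i] i True by (simp add: Y_def)
      qed (simp add: Y_def)
    qed
    moreover have "ffc m chi N c (W t) i = flow_field m chi N (Y t) i"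
      using Wff[OF tW i] False by (simp add: Y_def)
    ultimately show ?thesis by simp
  qed
  have Ysol: "flow_solution m chi N X0 (ereal (t1+h)) Y"
    unfolding flow_solution_def setT
  proof (intro conjI allI impI ballI)
    show "0 < ereal (t1 + h)" using t1S hpos by simp
  next
    fix i assume "i \<in> {1..N}"
    thus "Y 0 i = X0 i" using init tau0 by (simp add: Y_def)
  next
    fix t assume "0 \<le> t \<and> ereal t < ereal (t1 + h)"
    hence t: "t \<in> {0..<t1+h}" by simp
    show "Y t \<in> ordered_conf N" by (rule Yconf[OF t])
    fix i assume "i \<in> {1..N}"
    thus "((\<lambda>s. Y s i) has_real_derivative flow_field m chi N (Y t) i) (at t within {0..<t1+h})"
      by (rule Yder[OF t])
  qed
  have "\<exists>T' Y. T < T' \<and> flow_solution m chi N X0 T' Y \<and>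
          (\<forall>t. 0 \<le> t \<and> ereal t < T \<longrightarrow> (\<forall>i\<in>{1..N}. Y t i = X t i))"
  proof (intro exI conjI)
    show "T < ereal (t1 + h)" using T ht by simp
    show "flow_solution m chi N X0 (ereal (t1+h)) Y" by (rule Ysol)
    show "\<forall>t. 0 \<le> t \<and> ereal t < T \<longrightarrow> (\<forall>i\<in>{1..N}. Y t i = X t i)"
      using T by (simp add: Y_def)
  qed
  with nomax show False by blast
qed

end
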